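(* Let $q>1$, let $V=\bigoplus_iV_i$ be a finite-dimensional graded $\mathbb Q_\ell$-vector space and $F$ a semisimple degree-zero linear map on $V$ such that: (i) every eigenvalue of $F$ on $V_i$ (in $\overline{\mathbb Q}_\ell\cong\mathbb C$) has absolute value $q^{i/2}$; (ii) there is a Laurent polynomial $Q_V(t)=\sum_ia_it^i$ such that for all $k\ge0$ the supertrace of $F^k$ on $V$ equals $Q_V(q^k)=\sum_ia_iq^{ki}$. Then $V_{2i+1}=0$ for all $i$, $F$ acts on $V_{2i}$ as multiplication by $q^i$, and $\operatorname{Tr}_{F^k}(V)=Q_V(q^k)=P_V(q^{k/2})$, where $P_V(t)=\sum_i\dim V_i\,t^i$ is the Poincaré polynomial of $V$.
   Context: The supertrace of $F^k$ is $\sum_i(-1)^i\operatorname{Tr}(F^k|_{V_i})$. In the paper $q$ is a power of a prime. *)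

theory Defs
  imports "Jordan_Normal_Form.Char_Poly"
begin

text \<open>A graded finite-dimensional vector space V = \<Oplus>_i V_i with a degree-zero
  endomorphism F is modelled by the dimension function d :: int \<Rightarrow> nat
  (finite support) and the blocks F i, an (d i) x (d i) complex matrix (after
  base change along Q_l-bar = C).\<close>

definition semisimple_mat :: "complex mat \<Rightarrow> bool" where
  "semisimple_mat A \<longleftrightarrow> (\<exists>B. diagonal_mat B \<and> similar_mat A B)"

definition mat_trace :: "complex mat \<Rightarrow> complex" where
  "mat_trace A = (\<Sum>j<dim_row A. A $$ (j, j))"

definition supertrace :: "(int \<Rightarrow> nat) \<Rightarrow> (int \<Rightarrow> complex mat) \<Rightarrow> nat \<Rightarrow> complex" where
  "supertrace d F k = (\<Sum>i\<in>{i. d i \<noteq> 0}. (-1) powi i * mat_trace (F i ^\<^sub>m k))"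

definition laurent_eval :: "(int \<Rightarrow> complex) \<Rightarrow> complex \<Rightarrow> complex" where
  "laurent_eval a t = (\<Sum>i\<in>{i. a i \<noteq> 0}. a i * t powi i)"

definition poincare_eval :: "(int \<Rightarrow> nat) \<Rightarrow> complex \<Rightarrow> complex" where
  "poincare_eval d t = (\<Sum>i\<in>{i. d i \<noteq> 0}. of_nat (d i) * t powi i)"

end

theory Submission
  imports Defs
begin


lemma trace_comm:
  fixes A B :: "complex mat"
  assumes A: "A \<in> carrier_mat n m" and B: "B \<in> carrier_mat m n"
  shows "mat_trace (A * B) = mat_trace (B * A)"
proof -
  have "mat_trace (A * B) = (\<Sum>i<n. \<Sum>j<m. A $$ (i,j) * B $$ (j,i))"
    unfolding mat_trace_def using A B
    by (auto simp: scalar_prod_def intro!: sum.cong sum.reindex_bij_witness[of _ id id])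
  also have "\<dots> = (\<Sum>j<m. \<Sum>i<n. B $$ (j,i) * A $$ (i,j))"
    by (subst sum.swap) (simp add: mult.commute)
  also have "\<dots> = mat_trace (B * A)"
    unfolding mat_trace_def using A B
    by (auto simp: scalar_prod_def intro!: sum.cong sum.reindex_bij_witness[of _ id id])
  finally show ?thesis .
qed

lemma diag_mult:
  fixes X Y :: "complex mat"
  assumes X: "X \<in> carrier_mat n n" and Y: "Y \<in> carrier_mat n n"
    and dX: "diagonal_mat X" and dY: "diagonal_mat Y"
  shows "diagonal_mat (X * Y) \<and> (\<forall>j<n. (X * Y) $$ (j,j) = X $$ (j,j) * Y $$ (j,j))"
proof -
  have key: "(X * Y) $$ (i,j) = (if i = j then X $$ (i,i) * Y $$ (i,i) else 0)" if "i < n" "j < n" for i j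
  proof -
    have "(X * Y) $$ (i,j) = (\<Sum>l\<in>{0..<n}. X $$ (i,l) * Y $$ (l,j))"
      using X Y that by (auto simp: scalar_prod_def)
    also have "\<dots> = (\<Sum>l\<in>{0..<n}. if l = i then X $$ (i,i) * Y $$ (i,j) else 0)"
      using dX X that by (intro sum.cong) (auto simp: diagonal_mat_def)
    also have "\<dots> = X $$ (i,i) * Y $$ (i,j)" using that by simp
    also have "\<dots> = (if i = j then X $$ (i,i) * Y $$ (i,i) else 0)"
      using dY Y that by (auto simp: diagonal_mat_def)
    finally show ?thesis .
  qed
  show ?thesis using key X Y by (auto simp: diagonal_mat_def)
qed

lemma diag_pow:
  fixes B :: "complex mat"
  assumes B: "B \<in> carrier_mat n n" and dB: "diagonal_mat B"
  shows "diagonal_mat (B ^\<^sub>m k) \<and> (\<forall>j<n. (B ^\<^sub>m k) $$ (j,j) = B $$ (j,j) ^ k)"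
proof (induction k)
  case 0
  then show ?case using B by (auto simp: diagonal_mat_def)
next
  case (Suc k)
  have "B ^\<^sub>m Suc k = B ^\<^sub>m k * B" by simp
  then show ?case using diag_mult[of "B ^\<^sub>m k" n B] Suc B dB by (auto simp: mult.commute)
qed

lemma block:
  fixes A :: "complex mat"
  assumes A: "A \<in> carrier_mat n n" and ss: "semisimple_mat A"
  shows "\<exists>e. (\<forall>k. mat_trace (A ^\<^sub>m k) = (\<Sum>j<n. e j ^ k))
           \<and> (\<forall>j<n. eigenvalue A (e j))
           \<and> (\<forall>c. (\<forall>j<n. e j = c) \<longrightarrow> A = c \<cdot>\<^sub>m 1\<^sub>m n)"
proof -
  obtain B where dB: "diagonal_mat B" and sim: "similar_mat A B"
    using ss unfolding semisimple_mat_def by blast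
  then obtain P Q where w: "similar_mat_wit A B P Q" unfolding similar_mat_def by blast
  have Bc: "B \<in> carrier_mat n n" and Pc: "P \<in> carrier_mat n n" and Qc: "Q \<in> carrier_mat n n"
    and PQ: "P * Q = 1\<^sub>m n" and QP: "Q * P = 1\<^sub>m n" and AB: "A = P * B * Q"
    using w A unfolding similar_mat_wit_def Let_def by auto
  define e where "e j = B $$ (j,j)" for j
  have tr: "mat_trace (A ^\<^sub>m k) = (\<Sum>j<n. e j ^ k)" for k
  proof -
    have Bk: "B ^\<^sub>m k \<in> carrier_mat n n" using Bc by simp
    have "A ^\<^sub>m k = P * B ^\<^sub>m k * Q" by (rule similar_mat_wit_pow_id[OF w])
    also have "\<dots> = P * (B ^\<^sub>m k * Q)" using Pc Bk Qc by simp
    finally have "mat_trace (A ^\<^sub>m k) = mat_trace ((B ^\<^sub>m k * Q) * P)"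
      using trace_comm[OF Pc, of "B ^\<^sub>m k * Q"] Bk Qc by simp
    also have "(B ^\<^sub>m k * Q) * P = B ^\<^sub>m k" using Bk Qc Pc QP by (simp add: right_mult_one_mat)
    finally show ?thesis using diag_pow[OF Bc dB, of k] Bc unfolding mat_trace_def e_def by simp
  qed
  have ev: "eigenvalue A (e j)" if "j < n" for j
  proof -
    have ut: "upper_triangular B" using dB Bc unfolding diagonal_mat_def upper_triangular_def by auto
    have "poly (char_poly B) (e j) = 0"
      unfolding char_poly_upper_triangular[OF Bc ut] poly_prod_list
      using that Bc by (auto simp: diag_mat_def e_def o_def prod_list_zero_iff)
    then show ?thesis using eigenvalue_root_char_poly[OF A] char_poly_similar[OF sim] by simp
  qed
  have sc: "A = c \<cdot>\<^sub>m 1\<^sub>m n" if "\<forall>j<n. e j = c" for c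
  proof -
    have "B = c \<cdot>\<^sub>m 1\<^sub>m n" using that dB Bc unfolding e_def diagonal_mat_def
      by (intro eq_matI) auto
    then have "A = P * (c \<cdot>\<^sub>m 1\<^sub>m n) * Q" using AB by simp
    also have "\<dots> = c \<cdot>\<^sub>m (P * Q)" using Pc Qc
    proof -
      have "P * (c \<cdot>\<^sub>m 1\<^sub>m n) = c \<cdot>\<^sub>m P"
        using mult_smult_distrib[OF Pc one_carrier_mat, of c] Pc by (simp add: right_mult_one_mat)
      then show ?thesis using mult_smult_assoc_mat[OF Pc Qc] by simp
    qed
    finally show ?thesis using PQ by simp
  qed
  show ?thesis using tr ev sc by blast
qed



lemma exp_indep:
  fixes S :: "complex set"
  assumes "finite S"
  shows "(\<forall>k::nat. (\<Sum>x\<in>S. c x * x ^ k) = 0) \<Longrightarrow> \<forall>x\<in>S. c x = 0"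
  using assms
proof (induction S arbitrary: c rule: finite_induct)
  case empty
  then show ?case by simp
next
  case (insert m S)
  have h: "(\<Sum>x\<in>S. c x * x ^ k) = - c m * m ^ k" for k
    using insert(1,2) insert.prems[rule_format, of k] by (simp add: eq_neg_iff_add_eq_0 add.commute)
  have "(\<Sum>x\<in>S. (c x * (x - m)) * x ^ k) = 0" for k
  proof -
    have "(\<Sum>x\<in>S. (c x * (x - m)) * x ^ k) = (\<Sum>x\<in>S. c x * x ^ Suc k) - m * (\<Sum>x\<in>S. c x * x ^ k)"
      by (simp add: sum_distrib_left sum_subtractf algebra_simps)
    also have "\<dots> = 0" unfolding h by (simp add: algebra_simps)
    finally show ?thesis .
  qed
  then have "\<forall>x\<in>S. c x * (x - m) = 0" using insert.IH[of "\<lambda>x. c x * (x - m)"] by blast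
  then have S0: "\<forall>x\<in>S. c x = 0" using insert(2) by auto
  then have "c m = 0" using h[of 0] by simp
  then show ?case using S0 by simp
qed

lemma count_sum:
  fixes f :: "nat \<Rightarrow> complex"
  assumes "finite L" "f ` J \<subseteq> L" "finite J"
  shows "(\<Sum>x\<in>L. of_nat (card {j\<in>J. f j = x}) * x ^ k) = (\<Sum>j\<in>J. f j ^ k)"
proof -
  have "(\<Sum>j\<in>J. f j ^ k) = (\<Sum>j\<in>J. \<Sum>x\<in>L. if f j = x then x ^ k else 0)"
    using assms by (intro sum.cong) (auto simp: sum.delta')
  also have "\<dots> = (\<Sum>x\<in>L. \<Sum>j\<in>J. if f j = x then x ^ k else 0)" by (rule sum.swap)
  also have "\<dots> = (\<Sum>x\<in>L. of_nat (card {j\<in>J. f j = x}) * x ^ k)"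
    using assms by (intro sum.cong refl) (simp add: sum.If_cases Int_def conj_commute)
  finally show ?thesis by simp
qed

lemma powi_swap:
  fixes x :: real
  assumes "x > 0"
  shows "complex_of_real (x ^ k) powi j = complex_of_real (x powi j) ^ k"
by (simp add: power_int_power power_int_power' mult.commute flip: of_real_power of_real_power_int)



lemma half_pow:
  fixes q :: real
  assumes "q > 0"
  shows "complex_of_real (q powr (real k / 2)) powi (2 * m) = complex_of_real (q powi m) ^ k"
proof -
  have a: "(q powr (real k / 2)) ^ 2 = q ^ k"
    proof -
    have "(q powr (real k / 2)) ^ 2 = q powr (real k / 2) * q powr (real k / 2)" by (simp add: power2_eq_square)
    also have "\<dots> = q powr real k" by (simp flip: powr_add)
    also have "\<dots> = q ^ k" using assms by (simp add: powr_realpow)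
    finally show ?thesis .
  qed
  have "(q powr (real k / 2)) powi (2 * m) = ((q powr (real k / 2)) powi 2) powi m"
    by (rule power_int_mult)
  also have "\<dots> = (q ^ k) powi m" using a by simp
  also have "\<dots> = (q powi m) ^ k"
    by (simp add: power_int_power power_int_power' mult.commute)
  finally show ?thesis by (metis of_real_power of_real_power_int)
qed

lemma neg1_even: "((-1::complex) powi (2 * m)) = 1"
  by (simp add: power_int_mult)



theorem lemma3p4:
  fixes q :: real and d :: "int \<Rightarrow> nat" and F :: "int \<Rightarrow> complex mat"
    and a :: "int \<Rightarrow> complex"
  assumes q: "q > 1"
    and fin_d: "finite {i. d i \<noteq> 0}"
    and F_carrier: "\<And>i. F i \<in> carrier_mat (d i) (d i)"
    and F_ss: "\<And>i. semisimple_mat (F i)"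
    and F_abs: "\<And>i c. eigenvalue (F i) c \<Longrightarrow> cmod c = q powr (real_of_int i / 2)"
    and fin_a: "finite {i. a i \<noteq> 0}"
    and trace_formula: "\<And>k::nat. supertrace d F k = laurent_eval a (complex_of_real (q ^ k))"
  shows "(\<forall>i. d (2 * i + 1) = 0)
    \<and> (\<forall>i. F (2 * i) = complex_of_real (q powi i) \<cdot>\<^sub>m 1\<^sub>m (d (2 * i)))
    \<and> (\<forall>k::nat. supertrace d F k = laurent_eval a (complex_of_real (q ^ k))
         \<and> laurent_eval a (complex_of_real (q ^ k))
             = poincare_eval d (complex_of_real (q powr (real k / 2))))"
proof -
  define I where "I = {i. d i \<noteq> 0}"
  define AA where "AA = {i. a i \<noteq> 0}"
  have "\<forall>i. \<exists>ei. (\<forall>k. mat_trace (F i ^\<^sub>m k) = (\<Sum>j<d i. ei j ^ k))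
           \<and> (\<forall>j<d i. eigenvalue (F i) (ei j))
           \<and> (\<forall>c. (\<forall>j<d i. ei j = c) \<longrightarrow> F i = c \<cdot>\<^sub>m 1\<^sub>m (d i))"
    using block[OF F_carrier F_ss] by blast
  then obtain e where e: "\<And>i. (\<forall>k. mat_trace (F i ^\<^sub>m k) = (\<Sum>j<d i. e i j ^ k))
           \<and> (\<forall>j<d i. eigenvalue (F i) (e i j))
           \<and> (\<forall>c. (\<forall>j<d i. e i j = c) \<longrightarrow> F i = c \<cdot>\<^sub>m 1\<^sub>m (d i))"
    by metis
  have eabs: "cmod (e i j) = q powr (real_of_int i / 2)" if "j < d i" for i j
    using F_abs e that by blast
  have st: "supertrace d F k = (\<Sum>i\<in>I. (-1) powi i * (\<Sum>j<d i. e i j ^ k))" for k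
    unfolding supertrace_def I_def using e by simp
  have lt: "laurent_eval a (complex_of_real (q ^ k)) = (\<Sum>j\<in>AA. a j * complex_of_real (q powi j) ^ k)" for k
    unfolding laurent_eval_def AA_def by (simp add: power_int_power power_int_power' mult.commute)
  define L where "L = (\<Union>i\<in>I. e i ` {..<d i}) \<union> (\<lambda>j. complex_of_real (q powi j)) ` AA"
  have finL: "finite L" unfolding L_def using fin_d fin_a I_def AA_def by auto
  define c where "c x = (\<Sum>i\<in>I. (-1) powi i * of_nat (card {j\<in>{..<d i}. e i j = x}))
      - (\<Sum>j\<in>AA. if complex_of_real (q powi j) = x then a j else 0)" for x
  have zero: "(\<Sum>x\<in>L. c x * x ^ k) = 0" for k
  proof -
    have "(\<Sum>x\<in>L. c x * x ^ k) = (\<Sum>x\<in>L. (\<Sum>i\<in>I. (-1) powi i * (of_nat (card {j\<in>{..<d i}. e i j = x}) * x ^ k)))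
       - (\<Sum>x\<in>L. (\<Sum>j\<in>AA. if complex_of_real (q powi j) = x then a j * x ^ k else 0))"
      unfolding c_def sum_subtractf[symmetric] 
      by (intro sum.cong refl) (auto simp: left_diff_distrib sum_distrib_right mult.assoc intro!: sum.cong)
    also have "\<dots> = (\<Sum>i\<in>I. (-1) powi i * (\<Sum>x\<in>L. of_nat (card {j\<in>{..<d i}. e i j = x}) * x ^ k))
       - (\<Sum>j\<in>AA. (\<Sum>x\<in>L. if complex_of_real (q powi j) = x then a j * x ^ k else 0))"
      by (simp add: sum.swap[of _ L] sum_distrib_left)
    also have "\<dots> = (\<Sum>i\<in>I. (-1) powi i * (\<Sum>j<d i. e i j ^ k))
       - (\<Sum>j\<in>AA. a j * complex_of_real (q powi j) ^ k)"
    proof -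
      have "(\<Sum>x\<in>L. of_nat (card {j\<in>{..<d i}. e i j = x}) * x ^ k) = (\<Sum>j<d i. e i j ^ k)" if "i \<in> I" for i
        by (rule count_sum) (use finL that in \<open>auto simp: L_def\<close>)
      moreover have "(\<Sum>x\<in>L. if complex_of_real (q powi j) = x then a j * x ^ k else 0)
          = a j * complex_of_real (q powi j) ^ k" if "j \<in> AA" for j
        using that finL by (simp add: sum.delta L_def)
      ultimately show ?thesis by simp
    qed
    also have "\<dots> = 0" using trace_formula[of k] st[of k] lt[of k] by simp
    finally show ?thesis .
  qed
  have c0: "\<forall>x\<in>L. c x = 0" using exp_indep[OF finL] zero by blast
  have claim: "even i \<and> e i j0 = complex_of_real (q powi (i div 2))" if iI: "i \<in> I" and j0: "j0 < d i" for i j0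
  proof -
    define x where "x = e i j0"
    have xL: "x \<in> L" unfolding L_def x_def using iI j0 by auto
    have other: "card {j\<in>{..<d i'}. e i' j = x} = 0" if "i' \<noteq> i" for i'
    proof -
      have "{j\<in>{..<d i'}. e i' j = x} = {}"
      proof (rule ccontr)
        assume "{j\<in>{..<d i'}. e i' j = x} \<noteq> {}"
        then obtain j where "j < d i'" "e i' j = x" by auto
        then have "q powr (real_of_int i' / 2) = q powr (real_of_int i / 2)"
          using eabs[of j i'] eabs[OF j0] unfolding x_def by simp
        then have "real_of_int i' / 2 = real_of_int i / 2" using q by (simp add: powr_inj)
        then show False using that by simp
      qed
      then show ?thesis by simp
    qed
    have cpos: "card {j\<in>{..<d i}. e i j = x} > 0"
      using j0 unfolding x_def by (auto simp: card_gt_0_iff)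
    have "(\<Sum>i'\<in>I. (-1) powi i' * of_nat (card {j\<in>{..<d i'}. e i' j = x}))
        = ((-1) powi i :: complex) * of_nat (card {j\<in>{..<d i}. e i j = x})"
    proof -
      have "(\<Sum>i'\<in>I - {i}. (-1) powi i' * (of_nat (card {j\<in>{..<d i'}. e i' j = x}) :: complex)) = 0"
        using other by (intro sum.neutral) simp
      moreover have "finite I" using fin_d I_def by simp
      ultimately show ?thesis using iI by (simp add: sum.remove)
    qed
    moreover have "(-1::complex) powi i * of_nat (card {j\<in>{..<d i}. e i j = x}) \<noteq> 0"
    proof -
      have "(-1::complex) powi i \<noteq> 0" by simp
      moreover have "(of_nat (card {j\<in>{..<d i}. e i j = x}) :: complex) \<noteq> 0"
        using cpos by (metis less_irrefl of_nat_eq_0_iff)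
      ultimately show ?thesis by (simp only: mult_eq_0_iff de_Morgan_disj) blast
    qed
    ultimately have ne: "(\<Sum>j\<in>AA. if complex_of_real (q powi j) = x then a j else 0) \<noteq> 0"
      using c0 xL unfolding c_def by auto
    have "\<exists>j\<in>AA. complex_of_real (q powi j) = x"
    proof (rule ccontr)
      assume "\<not> ?thesis"
      then have "(\<Sum>j\<in>AA. if complex_of_real (q powi j) = x then a j else 0) = 0"
        by (intro sum.neutral) auto
      with ne show False by simp
    qed
    then obtain j where jA: "complex_of_real (q powi j) = x" by blast
    have qp: "q powi j > 0" using q by simp
    have "cmod x = q powi j" using jA qp by (metis norm_of_real abs_of_pos)
    also have "\<dots> = q powr real_of_int j" using q by (simp add: powr_real_of_int')
    finally have "q powr real_of_int j = q powr (real_of_int i / 2)" using eabs[OF j0] x_def by simp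
    then have "real_of_int j = real_of_int i / 2" using q by (simp add: powr_inj)
    then have ij: "i = 2 * j" by linarith
    then show ?thesis using jA x_def by simp
  qed
  have P1: "\<forall>i. d (2 * i + 1) = 0"
  proof
    fix i
    show "d (2 * i + 1) = 0"
    proof (rule ccontr)
      assume "d (2 * i + 1) \<noteq> 0"
      then have "2 * i + 1 \<in> I" "0 < d (2 * i + 1)" unfolding I_def by auto
      then show False using claim by fastforce
    qed
  qed
  have P2: "\<forall>i. F (2 * i) = complex_of_real (q powi i) \<cdot>\<^sub>m 1\<^sub>m (d (2 * i))"
  proof
    fix i
    have "\<forall>j<d (2 * i). e (2 * i) j = complex_of_real (q powi i)"
    proof (intro allI impI)
      fix j assume "j < d (2 * i)"
      then have "2 * i \<in> I" unfolding I_def by auto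
      then show "e (2 * i) j = complex_of_real (q powi i)" using claim \<open>j < d (2 * i)\<close> by fastforce
    qed
    then show "F (2 * i) = complex_of_real (q powi i) \<cdot>\<^sub>m 1\<^sub>m (d (2 * i))" using e by blast
  qed
  have P3: "laurent_eval a (complex_of_real (q ^ k))
             = poincare_eval d (complex_of_real (q powr (real k / 2)))" for k
  proof -
    have "laurent_eval a (complex_of_real (q ^ k)) = (\<Sum>i\<in>I. (-1) powi i * (\<Sum>j<d i. e i j ^ k))"
      using trace_formula[of k] st[of k] by simp
    also have "\<dots> = (\<Sum>i\<in>I. of_nat (d i) * complex_of_real (q powr (real k / 2)) powi i)"
    proof (intro sum.cong refl)
      fix i assume iI: "i \<in> I"
      then have "0 < d i" unfolding I_def by auto
      then obtain m where im: "i = 2 * m" using claim[OF iI, of 0] by (auto elim: evenE)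
      have "(\<Sum>j<d i. e i j ^ k) = of_nat (d i) * complex_of_real (q powi m) ^ k"
        using claim[OF iI] im by simp
      then show "(-1) powi i * (\<Sum>j<d i. e i j ^ k) = of_nat (d i) * complex_of_real (q powr (real k / 2)) powi i"
        using im neg1_even[of m] half_pow[of q k m] q by simp
    qed
    also have "\<dots> = poincare_eval d (complex_of_real (q powr (real k / 2)))"
      unfolding poincare_eval_def I_def ..
    finally show ?thesis .
  qed
  show ?thesis using P1 P2 P3 trace_formula by blast
qed

end
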